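(* Let $A,W\in \mathbb{C}^{n\times n}$ and $m\in \mathbb{N}$. Then $(WA)^m+I_n-WAWA^{\mathrm{cEP},W}$ is invertible.
   Context: $\mathbb{C}^{n\times n}$ carries the conjugate transpose involution. With $k=\max\{\mathrm{ind}(AW),\mathrm{ind}(WA)\}$ (Drazin indices), the weighted core-EP inverse $A^{\mathrm{cEP},W}$ of $A$ is the unique $X$ with $WAWX=(WA)^k[(WA)^k]^{\dagger}$ and $\mathcal{R}(X)\subseteq\mathcal{R}((AW)^k)$, where $\dagger$ is the Moore–Penrose inverse and $\mathcal{R}$ the range. *)

theory Defs
  imports "HOL-Analysis.Analysis"
begin

text \<open>Square complex matrices of size n are modelled as complex^'n^'n
  (the size n = CARD('n) is arbitrary, fixed by the type).\<close>

primrec mpow :: "complex^'n^'n \<Rightarrow> nat \<Rightarrow> complex^'n^'n" where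
  "mpow M 0 = mat 1"
| "mpow M (Suc k) = M ** mpow M k"

definition cadj :: "complex^'n^'m \<Rightarrow> complex^'m^'n" where
  "cadj M = (\<chi> i j. cnj (M $ j $ i))"

definition mrange :: "complex^'n^'m \<Rightarrow> (complex^'m) set" where
  "mrange M = range (\<lambda>x. M *v x)"

definition moore_penrose :: "complex^'n^'m \<Rightarrow> complex^'m^'n" where
  "moore_penrose A = (THE X. A ** X ** A = A \<and> X ** A ** X = X
      \<and> cadj (A ** X) = A ** X \<and> cadj (X ** A) = X ** A)"

definition drazin_index :: "complex^'n^'n \<Rightarrow> nat" where
  "drazin_index M = (LEAST k. rank (mpow M k) = rank (mpow M (Suc k)))"

definition wcep_inverse :: "complex^'n^'n \<Rightarrow> complex^'n^'n \<Rightarrow> complex^'n^'n" where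
  "wcep_inverse A W =
    (let k = max (drazin_index (A ** W)) (drazin_index (W ** A))
     in THE X. W ** A ** W ** X = mpow (W ** A) k ** moore_penrose (mpow (W ** A) k)
            \<and> mrange X \<subseteq> mrange (mpow (A ** W) k))"

end

theory Submission
  imports Defs
begin


type_synonym 'n cm = "complex^'n^'n"

lemma msub_ldistrib: "(A::'a::ring_1^'n^'m) ** (B - C) = A ** B - A ** C"
  by (vector matrix_matrix_mult_def sum_subtractf right_diff_distrib)
lemma msub_rdistrib: "((B::'a::ring_1^'n^'m) - C) ** A = B ** A - C ** A"
  by (vector matrix_matrix_mult_def sum_subtractf left_diff_distrib)
lemma madd_rdistrib: "((B::'a::ring_1^'n^'m) + C) ** A = B ** A + C ** A"
  by (vector matrix_matrix_mult_def sum.distrib distrib_right)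

lemma mpow_add: "mpow M (a + b) = mpow M a ** mpow M b"
  by (induction a) (simp_all add: matrix_mul_assoc)

lemma mpow_Suc_right: "mpow M (Suc k) = mpow M k ** M"
  using mpow_add[of M k 1] by simp

lemma mpow_commute: "mpow M a ** mpow M b = mpow M b ** mpow M a"
  by (metis mpow_add add.commute)

lemma mpow_mult: "mpow M (a * b) = mpow (mpow M a) b"
  by (induction b) (simp_all add: mpow_add)

lemma mpow_shift: "W ** mpow (A ** W) j = mpow (W ** A) j ** W"
proof (induction j)
  case (Suc j)
  have "W ** mpow (A ** W) (Suc j) = (W ** A) ** (W ** mpow (A ** W) j)"
    by (simp add: matrix_mul_assoc)
  also have "\<dots> = mpow (W ** A) (Suc j) ** W" using Suc by (simp add: matrix_mul_assoc)
  finally show ?case .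
qed simp

lemma transpose_mpow: "transpose (mpow M k) = mpow (transpose M) k"
  by (induction k) (simp_all add: matrix_transpose_mul, metis mpow_Suc_right mpow.simps(2))

lemma cadj_mult: "cadj (X ** Y) = cadj Y ** cadj X"
  by (simp add: cadj_def matrix_matrix_mult_def vec_eq_iff mult.commute)

lemma cadj_cadj[simp]: "cadj (cadj X) = X"
  by (simp add: cadj_def vec_eq_iff)

lemma cadj_mat1[simp]: "cadj (mat 1 :: complex^'n^'n) = mat 1"
  by (simp add: cadj_def mat_def vec_eq_iff)

lemma cadj_inj: "cadj X = cadj Y \<Longrightarrow> X = Y"
  by (metis cadj_cadj)

lemma cadj_zero: "cadj X ** X = 0 \<Longrightarrow> X = (0::complex^'n^'m)"
proof -
  assume h: "cadj X ** X = 0"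
  have "X $ i $ j = 0" for i j
  proof -
    have "(cadj X ** X) $ j $ j = 0" using h by simp
    then have "(\<Sum>l\<in>UNIV. cnj (X $ l $ j) * X $ l $ j) = 0"
      by (simp add: cadj_def matrix_matrix_mult_def)
    moreover have "cnj (X $ l $ j) * X $ l $ j = complex_of_real ((cmod (X $ l $ j))\<^sup>2)" for l
      using complex_norm_square[of "X $ l $ j"] by (simp add: mult.commute)
    ultimately have "complex_of_real (\<Sum>l\<in>UNIV. (cmod (X $ l $ j))\<^sup>2) = 0"
      by simp
    then have "(\<Sum>l\<in>UNIV. (cmod (X $ l $ j))\<^sup>2) = 0" by (simp only: of_real_eq_0_iff)
    then have "(cmod (X $ i $ j))\<^sup>2 = 0"
      by (subst (asm) sum_nonneg_eq_0_iff) auto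
    then show ?thesis by simp
  qed
  then show ?thesis by (simp add: vec_eq_iff)
qed

lemma cancel_l: "cadj A ** A ** U = cadj A ** A ** V \<Longrightarrow> A ** U = (A::complex^'n^'m) ** V"
proof -
  assume h: "cadj A ** A ** U = cadj A ** A ** V"
  let ?D = "U - V"
  have "cadj A ** A ** ?D = 0" using h by (simp add: msub_ldistrib)
  moreover have "cadj (A ** ?D) ** (A ** ?D) = cadj ?D ** (cadj A ** A ** ?D)"
    by (simp add: cadj_mult matrix_mul_assoc)
  ultimately have "cadj (A ** ?D) ** (A ** ?D) = 0" by simp
  then have "A ** ?D = 0" by (rule cadj_zero)
  then show ?thesis by (simp add: msub_ldistrib)
qed

lemma cancel_r: "U ** A ** cadj A = V ** A ** cadj A \<Longrightarrow> U ** A = V ** (A::complex^'n^'m)"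
proof -
  assume h: "U ** A ** cadj A = V ** A ** cadj A"
  have "cadj (cadj A) ** cadj A ** cadj U = cadj (cadj A) ** cadj A ** cadj V"
    using arg_cong[OF h, of cadj] by (simp add: cadj_mult matrix_mul_assoc)
  then have "cadj A ** cadj U = cadj A ** cadj V" by (rule cancel_l)
  then show ?thesis by (metis cadj_mult cadj_inj)
qed

lemma ginv_exists: "\<exists>G. M ** G ** M = (M::'a::field^'n^'n)"
proof -
  obtain g where g: "Vector_Spaces.linear (*s) (*s) g" "\<forall>v\<in>range ((*v) M). M *v g v = v"
    using vec.linear_exists_right_inverse_on[OF matrix_vector_mul_linear_gen vec.subspace_UNIV, of M]
    by auto
  have "M ** matrix g ** M = M"
    unfolding matrix_eq
    using g by (simp add: matrix_vector_mul_assoc[symmetric] matrix_works)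
  then show ?thesis by blast
qed



lemma L13: "\<exists>L. A ** L ** A = A \<and> cadj (A ** L) = A ** (L::complex^'n^'n)"
proof -
  obtain G where G: "cadj A ** A ** G ** (cadj A ** A) = cadj A ** (A::complex^'n^'n)"
    using ginv_exists by blast
  have "cadj A ** A ** (G ** cadj A ** A) = cadj A ** A ** mat 1" using G by (simp add: matrix_mul_assoc)
  then have "A ** (G ** cadj A ** A) = A ** mat 1" by (rule cancel_l)
  then have h1: "A ** G ** cadj A ** A = A" by (simp add: matrix_mul_assoc)
  have h2: "cadj A ** A ** cadj G ** cadj A = cadj A"
    using arg_cong[OF h1, of cadj] by (simp add: cadj_mult matrix_mul_assoc)
  have "A ** G ** cadj A = A ** G ** (cadj A ** A ** cadj G ** cadj A)" using h2 by simp
  also have "\<dots> = (A ** G ** cadj A ** A) ** cadj G ** cadj A" by (simp add: matrix_mul_assoc)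
  also have "\<dots> = A ** cadj G ** cadj A" using h1 by simp
  finally have h3: "A ** G ** cadj A = A ** cadj G ** cadj A" .
  have "A ** (G ** cadj A) ** A = A" using h1 by (simp add: matrix_mul_assoc)
  moreover have "cadj (A ** (G ** cadj A)) = A ** (G ** cadj A)"
    using h3 by (simp add: cadj_mult matrix_mul_assoc)
  ultimately show ?thesis by blast
qed

definition penrose :: "complex^'n^'n \<Rightarrow> complex^'n^'n \<Rightarrow> bool" where
  "penrose A X \<longleftrightarrow> A ** X ** A = A \<and> X ** A ** X = X
      \<and> cadj (A ** X) = A ** X \<and> cadj (X ** A) = X ** A"

lemma mp_exists: "\<exists>X. penrose A X"
proof -
  obtain L where L: "A ** L ** A = A" "cadj (A ** L) = A ** L" using L13 by blast
  obtain L' where L': "cadj A ** L' ** cadj A = cadj A" "cadj (cadj A ** L') = cadj A ** L'"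
    using L13 by blast
  define K where "K = cadj L'"
  have K1: "A ** K ** A = A"
    using arg_cong[OF L'(1), of cadj] by (simp add: K_def cadj_mult matrix_mul_assoc)
  have KA: "K ** A = cadj A ** L'"
    using L'(2) by (simp add: K_def cadj_mult)
  have K2: "cadj (K ** A) = K ** A" using L'(2) KA by simp
  define X where "X = K ** A ** L"
  have p1: "A ** X ** A = A" using K1 L(1) by (simp add: X_def matrix_mul_assoc)
  have "X ** A ** X = K ** (A ** L ** A) ** (K ** A) ** L" by (simp add: X_def matrix_mul_assoc)
  also have "\<dots> = K ** (A ** K ** A) ** L" using L(1) by (simp add: matrix_mul_assoc)
  also have "\<dots> = X" using K1 by (simp add: X_def)
  finally have p2: "X ** A ** X = X" .
  have AX: "A ** X = A ** L" using K1 by (simp add: X_def matrix_mul_assoc)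
  have XA: "X ** A = K ** A" using L(1) by (simp add: X_def matrix_mul_assoc[symmetric])
  show ?thesis unfolding penrose_def using p1 p2 AX XA L(2) K2 by metis
qed

lemma mp_unique:
  assumes X: "penrose A X" and Y: "penrose A Y" shows "X = Y"
proof -
  have x1: "A ** X ** A = A" and x2: "X ** A ** X = X" and x3: "cadj (A ** X) = A ** X"
    and x4: "cadj (X ** A) = X ** A" using X by (auto simp: penrose_def)
  have y1: "A ** Y ** A = A" and y2: "Y ** A ** Y = Y" and y3: "cadj (A ** Y) = A ** Y"
    and y4: "cadj (Y ** A) = Y ** A" using Y by (auto simp: penrose_def)
  have "X = X ** (A ** X)" using x2 by (simp add: matrix_mul_assoc)
  also have "\<dots> = X ** cadj X ** cadj A" using x3 by (metis cadj_mult matrix_mul_assoc)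
  also have "\<dots> = X ** cadj X ** cadj (A ** Y ** A)" using y1 by simp
  also have "\<dots> = X ** (cadj X ** cadj A) ** (cadj Y ** cadj A)" by (simp add: cadj_mult matrix_mul_assoc)
  also have "\<dots> = X ** (A ** X) ** (A ** Y)" using x3 y3 by (simp add: cadj_mult)
  also have "\<dots> = X ** A ** Y" using x2 by (simp add: matrix_mul_assoc)
  finally have ex: "X = X ** A ** Y" .
  have "Y = (Y ** A) ** Y" using y2 by (simp add: matrix_mul_assoc)
  also have "\<dots> = cadj A ** cadj Y ** Y" using y4 by (metis cadj_mult)
  also have "\<dots> = cadj (A ** X ** A) ** cadj Y ** Y" using x1 by simp
  also have "\<dots> = (cadj A ** cadj X) ** (cadj A ** cadj Y) ** Y" by (simp add: cadj_mult matrix_mul_assoc)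
  also have "\<dots> = (X ** A) ** (Y ** A) ** Y" using x4 y4 by (simp add: cadj_mult)
  also have "\<dots> = X ** A ** (Y ** A ** Y)" by (simp add: matrix_mul_assoc)
  also have "\<dots> = X ** A ** Y" using y2 by simp
  finally have ey: "Y = X ** A ** Y" .
  show ?thesis using ex ey by simp
qed

lemma mp1: "A ** moore_penrose A ** A = (A::complex^'n^'n)"
proof -
  have "\<exists>!X. penrose A X" using mp_exists mp_unique by blast
  then have "penrose A (THE X. penrose A X)" by (rule theI')
  moreover have "moore_penrose A = (THE X. penrose A X)"
    unfolding moore_penrose_def penrose_def by simp
  ultimately show ?thesis by (simp add: penrose_def)
qed



lemma mv_axis: "((X::'a::semiring_1^'n^'m) *v axis j 1) $ i = X $ i $ j"
  by (simp add: matrix_vector_mult_def axis_def if_distrib if_distribR cong: if_cong)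

lemma factor:
  assumes "range (\<lambda>x. (X::'a::semiring_1^'p^'m) *v x) \<subseteq> range (\<lambda>x. (N::'a^'q^'m) *v x)"
  shows "\<exists>Z. X = N ** Z"
proof -
  have "X *v axis j 1 \<in> range (\<lambda>x. N *v x)" for j using assms by blast
  then have "\<forall>j. \<exists>z. N *v z = X *v axis j 1" by (metis imageE)
  then obtain f where f: "\<And>j. N *v f j = X *v axis j 1" by metis
  define Z where "Z = (\<chi> i j. f j $ i)"
  have "(N ** Z) $ i $ j = X $ i $ j" for i j
  proof -
    have "(N ** Z) $ i $ j = (N *v f j) $ i"
      by (simp add: Z_def matrix_matrix_mult_def matrix_vector_mult_def)
    also have "\<dots> = X $ i $ j" using f mv_axis by metis
    finally show ?thesis .
  qed
  then show ?thesis by (metis vec_eq_iff)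
qed

lemma colspace: "vec.span (columns (A::'a::field^'n^'m)) = range (\<lambda>x. A *v x)"
proof
  show "range (\<lambda>x. A *v x) \<subseteq> vec.span (columns A)"
    using matrix_vector_mult_in_columnspace_gen by blast
  have "columns A \<subseteq> range (\<lambda>x. A *v x)"
  proof
    fix c assume "c \<in> columns A"
    then obtain i where "c = column i A" by (auto simp: columns_def)
    then have "c = A *v axis i 1" by (simp add: vec_eq_iff mv_axis column_def)
    then show "c \<in> range (\<lambda>x. A *v x)" by blast
  qed
  moreover have "vec.subspace (range (\<lambda>x. A *v x))"
    using vec.subspace_image[OF vec.subspace_UNIV] by (simp add: image_def)
  ultimately show "vec.span (columns A) \<subseteq> range (\<lambda>x. A *v x)"
    by (rule vec.span_minimal)
qed

lemma rank_range: "rank (A::'a::field^'n^'m) = vec.dim (range (\<lambda>x. transpose A *v x))"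
proof -
  have "rank A = vec.dim (columns (transpose A))" by (simp add: row_rank_def_gen)
  also have "\<dots> = vec.dim (vec.span (columns (transpose A)))" by (simp only: vec.dim_span)
  also have "\<dots> = vec.dim (range (\<lambda>x. transpose A *v x))" by (simp only: colspace)
  finally show ?thesis .
qed



lemma subspace_range: "vec.subspace (range (\<lambda>x. (A::'a::field^'n^'m) *v x))"
  using vec.subspace_image[OF vec.subspace_UNIV] by (simp add: image_def)

lemma range_mult_subset: "range (\<lambda>x. (A ** B) *v x) \<subseteq> range (\<lambda>x. A *v x)"
  by (auto simp: matrix_vector_mul_assoc[symmetric])

lemma rank_mpow_dec: "rank (mpow (M::complex^'n^'n) (Suc k)) \<le> rank (mpow M k)"
proof -
  have "transpose (mpow M (Suc k)) = transpose (mpow M k) ** transpose M"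
    by (simp add: matrix_transpose_mul)
  then have "range (\<lambda>x. transpose (mpow M (Suc k)) *v x) \<subseteq> range (\<lambda>x. transpose (mpow M k) *v x)"
    by (simp only: range_mult_subset)
  then show ?thesis unfolding rank_range by (rule vec.dim_subset)
qed

lemma ex_idx: "\<exists>k. rank (mpow (M::complex^'n^'n) k) = rank (mpow M (Suc k))"
proof (rule ccontr)
  assume "\<not> ?thesis"
  then have lt: "rank (mpow M (Suc k)) < rank (mpow M k)" for k
    using rank_mpow_dec le_neq_implies_less by metis
  have "rank (mpow M k) + k \<le> rank (mpow M 0)" for k
  proof (induction k)
    case (Suc k) then show ?case using lt[of k] by simp
  qed simp
  from this[of "Suc (rank (mpow M 0))"] show False by simp
qed

lemma idx_prop: "rank (mpow (M::complex^'n^'n) (drazin_index M)) = rank (mpow M (Suc (drazin_index M)))"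
  unfolding drazin_index_def using ex_idx by (rule LeastI_ex)

lemma leftstab:
  assumes "rank (mpow (M::complex^'n^'n) d) = rank (mpow M (Suc d))"
  shows "\<exists>Z. mpow M d = Z ** mpow M (Suc d)"
proof -
  let ?T = "transpose M"
  let ?S0 = "range (\<lambda>x. mpow ?T d *v x)" and ?S1 = "range (\<lambda>x. mpow ?T (Suc d) *v x)"
  have sub: "?S1 \<subseteq> ?S0" unfolding mpow_Suc_right by (rule range_mult_subset)
  have "vec.dim ?S0 = vec.dim ?S1" using assms by (simp only: rank_range transpose_mpow)
  then have "?S1 = ?S0" using vec.subspace_dim_equal[OF subspace_range subspace_range sub] by simp
  then obtain Y where "mpow ?T d = mpow ?T (Suc d) ** Y" using factor[of "mpow ?T d" "mpow ?T (Suc d)"] by auto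
  then have "transpose (mpow ?T d) = transpose Y ** transpose (mpow ?T (Suc d))"
    by (metis matrix_transpose_mul)
  then have "mpow M d = transpose Y ** mpow M (Suc d)" by (simp only: transpose_mpow transpose_transpose)
  then show ?thesis by blast
qed

lemma nullstab1:
  assumes Z: "mpow (M::complex^'n^'n) d = Z ** mpow M (Suc d)" and dk: "d \<le> k"
    and y: "mpow M (Suc k) *v y = 0"
  shows "mpow M k *v y = 0"
proof -
  obtain i where k: "k = d + i" using dk le_Suc_ex by blast
  have "mpow M k = mpow M d ** mpow M i" by (simp only: k mpow_add)
  also have "\<dots> = Z ** (mpow M (Suc d) ** mpow M i)" by (simp only: Z matrix_mul_assoc)
  also have "\<dots> = Z ** mpow M (Suc d + i)" by (simp only: mpow_add)
  also have "\<dots> = Z ** mpow M (Suc k)" using k by simp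
  finally have "mpow M k = Z ** mpow M (Suc k)" .
  then have "mpow M k *v y = Z *v (mpow M (Suc k) *v y)" by (simp only: matrix_vector_mul_assoc)
  then show ?thesis using y by simp
qed

lemma nullstab:
  assumes Z: "mpow (M::complex^'n^'n) d = Z ** mpow M (Suc d)" and dk: "d \<le> k"
  shows "mpow M (k + j) *v y = 0 \<Longrightarrow> mpow M k *v y = 0"
proof (induction j arbitrary: y)
  case (Suc j)
  have e: "mpow M (k + Suc j) = mpow M (Suc k) ** mpow M j"
    using mpow_add[of M "Suc k" j] by (simp only: add_Suc_shift add_Suc)
  have "mpow M (Suc k) *v (mpow M j *v y) = 0"
    using Suc.prems by (simp only: e matrix_vector_mul_assoc)
  then have "mpow M k *v (mpow M j *v y) = 0" by (rule nullstab1[OF Z dk])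
  then have "mpow M (k + j) *v y = 0" by (simp only: matrix_vector_mul_assoc mpow_add)
  then show ?case by (rule Suc.IH)
qed simp

lemma rightstab:
  assumes ns: "\<And>y. mpow (M::complex^'n^'n) (Suc k) *v y = 0 \<Longrightarrow> mpow M k *v y = 0"
  shows "\<exists>Y. mpow M k = mpow M (Suc k) ** Y"
proof -
  let ?S = "range (\<lambda>x. mpow M k *v x)"
  let ?f = "\<lambda>x. M *v x"
  have sp: "vec.span ?S = ?S" using subspace_range by (simp add: vec.span_eq_iff)
  have inj: "inj_on ?f (vec.span ?S)" unfolding sp
  proof (rule inj_onI)
    fix x y assume "x \<in> ?S" "y \<in> ?S" and e: "M *v x = M *v y"
    then obtain a b where a: "x = mpow M k *v a" and b: "y = mpow M k *v b" by auto
    have "mpow M (Suc k) *v (a - b) = 0"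
      using e by (simp add: a b matrix_vector_mul_assoc matrix_vector_mult_diff_distrib)
    then have "mpow M k *v (a - b) = 0" by (rule ns)
    then show "x = y" by (simp add: a b matrix_vector_mult_diff_distrib)
  qed
  have img: "?f ` ?S = range (\<lambda>x. mpow M (Suc k) *v x)"
    by (auto simp: image_def matrix_vector_mul_assoc)
  have "vec.dim (?f ` ?S) = vec.dim ?S"
    by (rule vec.dim_image_eq[OF matrix_vector_mul_linear_gen inj])
  then have dd: "vec.dim (range (\<lambda>x. mpow M (Suc k) *v x)) = vec.dim ?S" using img by simp
  have sub: "range (\<lambda>x. mpow M (Suc k) *v x) \<subseteq> ?S" unfolding mpow_Suc_right by (rule range_mult_subset)
  have "range (\<lambda>x. mpow M (Suc k) *v x) = ?S"
    using vec.subspace_dim_equal[OF subspace_range subspace_range sub] dd by simp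
  then show ?thesis using factor[of "mpow M k" "mpow M (Suc k)"] by auto
qed



lemma vec_double_zero: "(v::complex^'n) + v = 0 \<Longrightarrow> v = 0"
proof -
  assume h: "v + v = 0"
  have c: "v $ i + v $ i = 0" for i using arg_cong[OF h, of "\<lambda>w. w $ i"] by simp
  have "v $ i = 0" for i using mult_2[of "v $ i"] c[of i] by (metis mult_eq_0_iff zero_neq_numeral)
  then show ?thesis by (simp add: vec_eq_iff)
qed

lemma main_inv:
  fixes B X :: "complex^'n^'n"
  assumes g: "mpow B k ** X ** mpow B k = mpow B k"
    and ns: "\<And>y. mpow B (k + m) *v y = 0 \<Longrightarrow> mpow B k *v y = 0"
  shows "invertible (mpow B m + mat 1 - mpow B k ** X)"
proof -
  define P where "P = mpow B k ** X"
  define Q where "Q = mat 1 - P"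
  have PP: "P ** P = P" using g by (simp add: P_def matrix_mul_assoc)
  have QBk: "Q ** mpow B k = 0" using g by (simp add: Q_def P_def msub_rdistrib)
  have QQ: "Q ** Q = Q" using PP by (simp add: Q_def msub_rdistrib msub_ldistrib)
  have comm: "B ** mpow B k = mpow B k ** B" by (metis mpow_Suc_right mpow.simps(2))
  have QBP: "Q ** B ** P = 0"
  proof -
    have "Q ** B ** P = Q ** (B ** mpow B k) ** X" by (simp add: P_def matrix_mul_assoc)
    also have "\<dots> = Q ** (mpow B k ** B) ** X" by (simp only: comm)
    also have "\<dots> = Q ** mpow B k ** (B ** X)" by (simp add: matrix_mul_assoc)
    finally have "Q ** B ** P = Q ** mpow B k ** (B ** X)" .
    then show ?thesis using QBk by simp
  qed
  define N where "N = Q ** B"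
  have Npow: "mpow N (Suc j) = Q ** mpow B (Suc j)" for j
  proof (induction j)
    case 0 then show ?case by (simp add: N_def)
  next
    case (Suc j)
    have "mpow N (Suc (Suc j)) = Q ** B ** Q ** mpow B (Suc j)"
      using Suc by (simp only: mpow.simps(2) N_def matrix_mul_assoc)
    also have "\<dots> = Q ** B ** mpow B (Suc j) - Q ** B ** P ** mpow B (Suc j)"
      by (simp only: Q_def msub_ldistrib msub_rdistrib matrix_mul_rid)
    also have "\<dots> = Q ** mpow B (Suc (Suc j))" using QBP
      by (simp only: mpow.simps(2) matrix_mul_assoc times0_left diff_zero)
    finally show ?case .
  qed
  have "mpow N (Suc k) = Q ** mpow B (Suc k)" by (rule Npow)
  also have "\<dots> = Q ** mpow B k ** B" by (simp only: mpow_Suc_right matrix_mul_assoc)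
  also have "\<dots> = 0" using QBk by simp
  finally have Nk: "mpow N (Suc k) = 0" .
  have Nbig: "mpow N i = 0" if "Suc k \<le> i" for i
  proof -
    define i' where "i' = i - Suc k"
    have "i = i' + Suc k" using that by (simp add: i'_def)
    then show ?thesis by (simp only: mpow_add Nk times0_right)
  qed
  have QBmP: "Q ** mpow B m ** P = 0"
  proof -
    have "Q ** mpow B m ** P = Q ** (mpow B m ** mpow B k) ** X"
      by (simp only: P_def matrix_mul_assoc)
    also have "\<dots> = Q ** (mpow B k ** mpow B m) ** X" by (simp only: mpow_commute[of B m k])
    also have "\<dots> = Q ** mpow B k ** (mpow B m ** X)" by (simp only: matrix_mul_assoc)
    finally have "Q ** mpow B m ** P = Q ** mpow B k ** (mpow B m ** X)" .
    then show ?thesis using QBk by simp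
  qed
  have PQ: "P + Q = mat 1" by (simp add: Q_def)
  have "\<forall>x. (mpow B m + mat 1 - P) *v x = 0 \<longrightarrow> x = 0"
  proof (intro allI impI)
    fix x assume Mx: "(mpow B m + mat 1 - P) *v x = 0"
    have e: "mpow B m + mat 1 - P = mpow B m + Q" by (simp add: Q_def add_diff_eq)
    have h1: "mpow B m *v x + Q *v x = 0" using Mx unfolding e by (simp only: matrix_vector_mult_add_rdistrib)
    define v where "v = Q *v x"
    have Qv: "Q *v v = v" by (simp add: v_def matrix_vector_mul_assoc QQ)
    have xd: "x = P *v x + v" using PQ unfolding v_def
      by (metis matrix_vector_mult_add_rdistrib matrix_vector_mul_lid)
    have "Q *v (mpow B m *v x + Q *v x) = 0" using h1 by simp
    then have h2: "Q *v (mpow B m *v x) + v = 0"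
      by (simp add: matrix_vector_right_distrib matrix_vector_mul_assoc QQ v_def)
    have "Q *v (mpow B m *v x) = (Q ** mpow B m ** P) *v x + Q *v (mpow B m *v v)"
      by (subst xd) (simp add: matrix_vector_right_distrib matrix_vector_mul_assoc matrix_mul_assoc)
    then have hv: "Q *v (mpow B m *v v) + v = 0" using h2 QBmP by simp
    have v0: "v = 0"
    proof (cases m)
      case 0
      then show ?thesis using hv Qv by (simp add: vec_double_zero)
    next
      case (Suc m')
      have Nm: "mpow N m *v v = - v" using hv
        by (simp add: Suc Npow matrix_vector_mul_assoc[symmetric] eq_neg_iff_add_eq_0 del: mpow.simps)
      define S where "S = mpow N m ** mpow N m"
      have Sv: "S *v v = v" unfolding S_def
        by (simp only: matrix_vector_mul_assoc[symmetric] Nm) (simp add: matrix_vector_mult_diff_distrib[of _ 0, simplified] Nm)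
      have St: "mpow S t *v v = v" for t
      proof (induction t)
        case (Suc t)
        then show ?case by (simp only: mpow.simps(2) matrix_vector_mul_assoc[symmetric] Sv)
      qed simp
      have "mpow S (Suc k) = mpow N ((m + m) * Suc k)" by (simp only: S_def mpow_add mpow_mult)
      also have "\<dots> = 0" using Suc by (intro Nbig) simp
      finally show ?thesis using St[of "Suc k"] by simp
    qed
    have xP: "x = P *v x" using xd v0 by simp
    have Bmx: "mpow B m *v x = 0" using h1 v0 by (simp add: v_def)
    have "mpow B (k + m) *v (X *v x) = mpow B m *v (P *v x)"
      by (simp only: add.commute[of k m] mpow_add P_def matrix_vector_mul_assoc matrix_mul_assoc)
    also have "\<dots> = 0" using xP Bmx by simp
    finally have "mpow B k *v (X *v x) = 0" by (rule ns)
    then show "x = 0" using xP by (simp add: P_def matrix_vector_mul_assoc)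
  qed
  then show ?thesis unfolding P_def
    by (simp add: invertible_left_inverse matrix_left_invertible_ker)
qed



lemma stab_all:
  fixes M :: "complex^'n^'n"
  assumes "drazin_index M \<le> k"
  shows "\<And>j y. mpow M (k + j) *v y = 0 \<Longrightarrow> mpow M k *v y = 0"
    and "\<exists>Y. mpow M k = mpow M (Suc k) ** Y"
proof -
  obtain Z where Z: "mpow M (drazin_index M) = Z ** mpow M (Suc (drazin_index M))"
    using leftstab[OF idx_prop] by blast
  show ns: "\<And>j y. mpow M (k + j) *v y = 0 \<Longrightarrow> mpow M k *v y = 0"
    using nullstab[OF Z assms] by blast
  show "\<exists>Y. mpow M k = mpow M (Suc k) ** Y"
    by (rule rightstab) (rule ns[of 1], simp)
qed

lemma wcep_prop:
  fixes A W :: "complex^'n^'n"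
  defines "k \<equiv> max (drazin_index (A ** W)) (drazin_index (W ** A))"
  shows "W ** A ** W ** wcep_inverse A W = mpow (W ** A) k ** moore_penrose (mpow (W ** A) k)"
proof -
  let ?B = "W ** A" and ?C = "A ** W"
  let ?P = "mpow ?B k ** moore_penrose (mpow ?B k)"
  define R where "R X \<longleftrightarrow> W ** A ** W ** X = ?P \<and> mrange X \<subseteq> mrange (mpow ?C k)" for X
  have dB: "drazin_index ?B \<le> k" and dC: "drazin_index ?C \<le> k" by (simp_all add: k_def)
  obtain Y1 where Y1: "mpow ?B k = mpow ?B (Suc k) ** Y1" using stab_all(2)[OF dB] by blast
  obtain Y2 where Y2: "mpow ?C k = mpow ?C (Suc k) ** Y2" using stab_all(2)[OF dC] by blast
  have nsC: "\<And>j y. mpow ?C (k + j) *v y = 0 \<Longrightarrow> mpow ?C k *v y = 0" using stab_all(1)[OF dC] by blast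
  have WAWC: "W ** A ** W ** mpow ?C j = mpow ?B (Suc j) ** W" for j
  proof -
    have "W ** A ** W ** mpow ?C j = W ** mpow ?C (Suc j)" by (simp add: matrix_mul_assoc)
    also have "\<dots> = mpow ?B (Suc j) ** W" by (rule mpow_shift)
    finally show ?thesis .
  qed
  have hB: "mpow ?B (Suc k) = mpow ?B (Suc k) ** W ** Y2 ** A"
  proof -
    have "mpow ?B (Suc k) = mpow ?B k ** W ** A" by (simp only: mpow_Suc_right matrix_mul_assoc)
    also have "\<dots> = W ** mpow ?C k ** A" by (simp only: mpow_shift)
    also have "\<dots> = W ** mpow ?C (Suc k) ** Y2 ** A" by (subst Y2) (simp only: matrix_mul_assoc)
    also have "\<dots> = mpow ?B (Suc k) ** W ** Y2 ** A" by (simp only: mpow_shift)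
    finally show ?thesis .
  qed
  define X0 where "X0 = mpow ?C k ** (Y2 ** A ** Y1 ** moore_penrose (mpow ?B k))"
  have "W ** A ** W ** X0 = mpow ?B (Suc k) ** W ** Y2 ** A ** Y1 ** moore_penrose (mpow ?B k)"
    unfolding X0_def by (simp only: matrix_mul_assoc WAWC)
  also have "\<dots> = mpow ?B (Suc k) ** Y1 ** moore_penrose (mpow ?B k)"
    by (simp only: hB[symmetric])
  also have "\<dots> = ?P" by (simp only: Y1[symmetric])
  finally have X0a: "W ** A ** W ** X0 = ?P" .
  have X0b: "mrange X0 \<subseteq> mrange (mpow ?C k)" unfolding mrange_def X0_def by (rule range_mult_subset)
  have uniq: "X1 = X2" if "R X1" "R X2" for X1 X2
  proof -
    have "range (\<lambda>x. X1 *v x) \<subseteq> range (\<lambda>x. mpow ?C k *v x)" using that(1) unfolding R_def mrange_def by simp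
    then obtain Z1 where Z1: "X1 = mpow ?C k ** Z1" using factor by blast
    have "range (\<lambda>x. X2 *v x) \<subseteq> range (\<lambda>x. mpow ?C k *v x)" using that(2) unfolding R_def mrange_def by simp
    then obtain Z2 where Z2: "X2 = mpow ?C k ** Z2" using factor by blast
    define D where "D = Z1 - Z2"
    have "W ** A ** W ** mpow ?C k ** D = 0"
      using that unfolding R_def D_def by (simp add: msub_ldistrib matrix_mul_assoc Z1 Z2)
    then have h0: "mpow ?B (Suc k) ** W ** D = 0" by (simp only: WAWC)
    have "A ** (mpow ?B (Suc k) ** W) ** D = 0"
      using arg_cong[OF h0, of "\<lambda>M. A ** M"] by (simp only: matrix_mul_assoc times0_right)
    moreover have "A ** (mpow ?B (Suc k) ** W) = mpow ?C (k + 2)"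
      by (simp only: mpow_shift[symmetric]) (simp add: matrix_mul_assoc)
    ultimately have e: "mpow ?C (k + 2) ** D = 0" by simp
    have "mpow ?C k ** D = 0"
    proof -
      have "(mpow ?C k ** D) *v y = 0" for y
      proof -
        have "mpow ?C (k + 2) *v (D *v y) = 0" using e by (simp add: matrix_vector_mul_assoc)
        then have "mpow ?C k *v (D *v y) = 0" by (rule nsC)
        then show ?thesis by (simp add: matrix_vector_mul_assoc)
      qed
      then show ?thesis by (simp add: matrix_eq)
    qed
    then show ?thesis by (simp add: D_def msub_ldistrib Z1 Z2)
  qed
  have ex1: "\<exists>!X. R X" using X0a X0b uniq unfolding R_def by blast
  have "wcep_inverse A W = (THE X. R X)" unfolding wcep_inverse_def R_def k_def Let_def by simp
  then show ?thesis using theI'[OF ex1] unfolding R_def by simp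
qed

theorem corollary3p8:
  fixes A W :: "complex^'n^'n" and m :: nat
  shows "invertible (mpow (W ** A) m + mat 1 - W ** A ** W ** wcep_inverse A W)"
proof -
  define k where "k = max (drazin_index (A ** W)) (drazin_index (W ** A))"
  have dB: "drazin_index (W ** A) \<le> k" by (simp add: k_def)
  show ?thesis unfolding wcep_prop k_def[symmetric]
    by (rule main_inv[OF mp1]) (rule stab_all(1)[OF dB])
qed

end
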